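(* For integers $m\ge2$, $k\ge1$ let $V_J(m,k)=\left(1-\frac1m\right)\frac{k}{\ln m}$ and $V_H(m,k)=\frac{k(m^{1/k}-1)}{\ln m}$. Then $\min_{m\in\mathbb{Z}_{\ge2},\,k\in\mathbb{Z}_{\ge1}}\max\{V_J(m,k),V_H(m,k)\}=\frac{2(\sqrt3-1)}{\ln 3}$, attained at $m=3$, $k=2$. *)

theory Defs
  imports Complex_Main
begin

definition V_J :: "nat \<Rightarrow> nat \<Rightarrow> real" where
  "V_J m k = (1 - 1 / real m) * real k / ln (real m)"

definition V_H :: "nat \<Rightarrow> nat \<Rightarrow> real" where
  "V_H m k = real k * (real m powr (1 / real k) - 1) / ln (real m)"

end

theory Submission
  imports Defs
begin

lemma ln3_ge1: "1 \<le> ln (3::real)"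
  using exp_le by (simp add: ln_ge_iff)

lemma sqrt3_le: "sqrt 3 \<le> (7/4::real)"
proof -
  have "sqrt 3 \<le> sqrt ((7/4::real)^2)" by (rule real_sqrt_le_mono) (simp add: power2_eq_square)
  then show ?thesis by simp
qed

lemma sqrt3_ge: "1 \<le> sqrt (3::real)"
  by simp

lemma exp_t0: "exp (ln 3 / 2) = sqrt (3::real)"
proof -
  have "exp (ln 3 / 2) = (3::real) powr (1/2)" by (simp add: powr_def)
  also have "\<dots> = sqrt 3" by (simp add: powr_half_sqrt)
  finally show ?thesis .
qed

lemma caseH:
  fixes t :: real
  assumes "ln 3 / 2 \<le> t"
  shows "2 * (sqrt 3 - 1) / ln 3 \<le> (exp t - 1) / t"
proof -
  define t0 :: real where "t0 = ln 3 / 2"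
  have t0pos: "t0 \<ge> 1/2" using ln3_ge1 by (simp add: t0_def)
  have tpos: "t > 0" using assms t0pos t0_def by linarith
  have e: "exp t \<ge> sqrt 3 * (1 + (t - t0))"
  proof -
    have "exp t = exp t0 * exp (t - t0)" by (simp flip: exp_add)
    also have "exp t0 = sqrt 3" using exp_t0 by (simp add: t0_def)
    finally show ?thesis using exp_ge_add_one_self[of "t - t0"]
      by (simp add: mult_left_mono)
  qed
  have k: "sqrt 3 * t0 \<ge> sqrt 3 - 1"
  proof -
    have "sqrt 3 * t0 \<ge> sqrt 3 * (1/2)" using t0pos by (simp add: mult_left_mono)
    then show ?thesis using sqrt3_le by linarith
  qed
  have "(sqrt 3 - 1) * t \<le> t0 * (exp t - 1)"
  proof -
    have d: "t - t0 \<ge> 0" using assms t0_def by simp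
    have "(sqrt 3 - 1) * (t - t0) \<le> sqrt 3 * t0 * (t - t0)"
      using k d by (simp add: mult_right_mono)
    then have "(sqrt 3 - 1) * t \<le> t0 * (sqrt 3 - 1 + sqrt 3 * (t - t0))"
      by (simp add: algebra_simps)
    also have "\<dots> \<le> t0 * (exp t - 1)"
      using e t0pos by (intro mult_left_mono) (auto simp: algebra_simps)
    finally show ?thesis .
  qed
  then have "(sqrt 3 - 1) / t0 \<le> (exp t - 1) / t"
    using tpos t0pos by (simp add: divide_simps mult.commute)
  moreover have "2 * (sqrt 3 - 1) / ln 3 = (sqrt 3 - 1) / t0" by (simp add: t0_def)
  ultimately show ?thesis by simp
qed

lemma m2_bound: "2 * (sqrt 3 - 1) / ln 3 \<le> 1 / ln (2::real)"
proof -
  have "(4::real) powr (sqrt 3 - 1) \<le> 4 powr (3/4)"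
    using sqrt3_le by (intro powr_mono) auto
  also have "(4::real) powr (3/4) = 2 powr (3/2)"
  proof -
    have "((2::real) powr 2) powr (3/4) = 2 powr (2 * (3/4))" by (rule powr_powr)
    moreover have "(2::real) powr 2 = 4" by simp
    ultimately show ?thesis by simp
  qed
  also have "(2::real) powr (3/2) = 2 * sqrt 2"
  proof -
    have "(2::real) powr (3/2) = 2 powr (1 + 1/2)" by simp
    also have "\<dots> = 2 powr 1 * 2 powr (1/2)" by (rule powr_add)
    also have "\<dots> = 2 * sqrt 2" by (simp add: powr_half_sqrt)
    finally show ?thesis .
  qed
  also have "2 * sqrt 2 \<le> (3::real)"
  proof -
    have "(2 * sqrt 2)^2 \<le> (3::real)^2" by (simp add: power_mult_distrib)
    then show ?thesis by (rule power2_le_imp_le) simp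
  qed
  finally have "4 powr (sqrt 3 - 1) \<le> (3::real)" .
  then have "ln (4 powr (sqrt 3 - 1)) \<le> ln (3::real)" by (subst ln_le_cancel_iff) auto
  moreover have "ln ((4::real) powr (sqrt 3 - 1)) = (sqrt 3 - 1) * ln 4" by (rule ln_powr)
  ultimately have "(sqrt 3 - 1) * ln 4 \<le> ln (3::real)" by simp
  moreover have "ln (4::real) = 2 * ln 2"
    using ln_realpow[of 2 2] by simp
  ultimately have h: "2 * (sqrt 3 - 1) * ln 2 \<le> ln (3::real)" by (simp add: algebra_simps)
  have "ln (2::real) > 0" "ln (3::real) > 0" by auto
  with h show ?thesis by (simp add: divide_simps mult.commute)
qed

theorem claim3p2:
  shows "(\<forall>m k::nat. m \<ge> 2 \<longrightarrow> k \<ge> 1 \<longrightarrow>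
            2 * (sqrt 3 - 1) / ln 3 \<le> max (V_J m k) (V_H m k))
       \<and> max (V_J 3 2) (V_H 3 2) = 2 * (sqrt 3 - 1) / ln 3"
proof
  show "\<forall>m k::nat. m \<ge> 2 \<longrightarrow> k \<ge> 1 \<longrightarrow>
            2 * (sqrt 3 - 1) / ln 3 \<le> max (V_J m k) (V_H m k)"
  proof (intro allI impI)
    fix m k :: nat
    assume m: "m \<ge> 2" and k: "k \<ge> 1"
    define t where "t = ln (real m) / real k"
    have Lpos: "ln (real m) > 0" using m by simp
    have tpos: "t > 0" using Lpos k by (simp add: t_def)
    have VH: "V_H m k = (exp t - 1) / t"
    proof -
      have "real m powr (1 / real k) = exp t" using m by (simp add: powr_def t_def)
      then show ?thesis using k Lpos by (simp add: V_H_def t_def divide_simps)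
    qed
    have VJ: "V_J m k = (1 - 1 / real m) / t"
      using k Lpos by (simp add: V_J_def t_def divide_simps)
    show "2 * (sqrt 3 - 1) / ln 3 \<le> max (V_J m k) (V_H m k)"
    proof (cases "ln 3 / 2 \<le> t")
      case True
      then show ?thesis using caseH VH by fastforce
    next
      case False
      then have tl: "t < ln 3 / 2" by simp
      have "2 * (sqrt 3 - 1) / ln 3 \<le> V_J m k"
      proof (cases "m \<ge> 4")
        case True
        have a: "sqrt 3 - 1 \<le> 1 - 1 / real m"
        proof -
          have "1 / real m \<le> 1/4" using True by (simp add: divide_simps)
          then show ?thesis using sqrt3_le by linarith
        qed
        have "2 * (sqrt 3 - 1) / ln 3 = (sqrt 3 - 1) / (ln 3 / 2)" by simp
        also have "\<dots> \<le> (1 - 1 / real m) / (ln 3 / 2)"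
          using a ln3_ge1 by (intro divide_right_mono) auto
        also have "\<dots> \<le> (1 - 1 / real m) / t"
          using tl tpos a sqrt3_ge True by (intro divide_left_mono) auto
        finally show ?thesis using VJ by simp
      next
        case False
        then have "m = 2 \<or> m = 3" using m by auto
        then show ?thesis
        proof
          assume m2: "m = 2"
          have "k \<noteq> 1"
          proof
            assume "k = 1"
            then have "t = ln 2" using m2 t_def by simp
            moreover have "ln 3 / 2 \<le> ln (2::real)"
            proof -
              have "ln 3 \<le> ln (4::real)" by simp
              also have "ln (4::real) = 2 * ln 2" using ln_realpow[of 2 2] by simp
              finally show ?thesis by simp
            qed
            ultimately show False using tl by simp
          qed
          then have k2: "real k \<ge> 2" using k by simp
          have "1 / ln (2::real) \<le> real k / (2 * ln 2)"
            using k2 by (simp add: divide_simps)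
          moreover have "V_J m k = real k / (2 * ln 2)"
            using m2 by (simp add: V_J_def)
          ultimately show ?thesis using m2_bound by simp
        next
          assume m3: "m = 3"
          have "k \<noteq> 1 \<and> k \<noteq> 2"
            using tl m3 t_def ln3_ge1 by auto
          then have k3: "real k \<ge> 3" using k by simp
          have "V_J m k = 2 * real k / (3 * ln 3)"
            using m3 by (simp add: V_J_def)
          also have "\<dots> \<ge> 2 / ln 3"
            using k3 ln3_ge1 by (simp add: divide_simps)
          finally show ?thesis using sqrt3_le ln3_ge1 by (simp add: divide_simps)
        qed
      qed
      then show ?thesis by simp
    qed
  qed
next
  have VJ: "V_J 3 2 = 4 / (3 * ln 3)" by (simp add: V_J_def)
  have VH: "V_H 3 2 = 2 * (sqrt 3 - 1) / ln 3"
    by (simp add: V_H_def powr_half_sqrt)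
  have "4 / 3 \<le> 2 * (sqrt 3 - 1)"
  proof -
    have "(5/3::real)^2 \<le> 3" by (simp add: power2_eq_square)
    then have "sqrt ((5/3)^2) \<le> sqrt (3::real)" by (rule real_sqrt_le_mono)
    then have "5/3 \<le> sqrt (3::real)" by simp
    then show ?thesis by simp
  qed
  then have "(4/3) / ln 3 \<le> 2 * (sqrt 3 - 1) / ln 3" using ln3_ge1 by (intro divide_right_mono) auto
  then have "V_J 3 2 \<le> V_H 3 2" using VJ VH by simp
  then show "max (V_J 3 2) (V_H 3 2) = 2 * (sqrt 3 - 1) / ln 3" using VH by simp
qed

end
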